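(* Let $G$ be a finite non-abelian group satisfying condition (Con), let $L$ be the Laplacian matrix of $\mathcal C_G$, and let $r$ be the number of connected components of the induced subgraph of $\mathcal C_G$ on $G\setminus Z(G)$. Then $|Z(G)|$ is an eigenvalue of $L$ with multiplicity at least $r-1$.
   Context: For a finite group $G$, the commuting graph $\mathcal C_G$ is the simple undirected graph with vertex set $G$ in which distinct $u,v\in G$ are adjacent iff $uv=vu$. The Laplacian matrix of a simple graph is $L=D-A$ ($A$ adjacency matrix, $D$ diagonal degree matrix). $Z(G)$ is the center of $G$ and $C(v)=\{w\in G: wv=vw\}$ the centralizer of $v$. Condition (Con): for all $u,v\in G\setminus Z(G)$, either $C(u)=C(v)$ or $C(u)\cap C(v)=Z(G)$. *)

theory Defs
  imports "HOL-Algebra.Group" "Jordan_Normal_Form.Char_Poly"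
begin

definition centralizer :: "('a, 'b) monoid_scheme \<Rightarrow> 'a \<Rightarrow> 'a set" where
  "centralizer G v = {w \<in> carrier G. w \<otimes>\<^bsub>G\<^esub> v = v \<otimes>\<^bsub>G\<^esub> w}"

definition center :: "('a, 'b) monoid_scheme \<Rightarrow> 'a set" where
  "center G = {z \<in> carrier G. \<forall>g \<in> carrier G. z \<otimes>\<^bsub>G\<^esub> g = g \<otimes>\<^bsub>G\<^esub> z}"

definition con_condition :: "('a, 'b) monoid_scheme \<Rightarrow> bool" where
  "con_condition G \<longleftrightarrow>
     (\<forall>u \<in> carrier G - center G. \<forall>v \<in> carrier G - center G.
        centralizer G u = centralizer G v \<or> centralizer G u \<inter> centralizer G v = center G)"

definition comm_adj :: "('a, 'b) monoid_scheme \<Rightarrow> 'a \<Rightarrow> 'a \<Rightarrow> bool" where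
  "comm_adj G u v \<longleftrightarrow> u \<in> carrier G \<and> v \<in> carrier G \<and> u \<noteq> v \<and> u \<otimes>\<^bsub>G\<^esub> v = v \<otimes>\<^bsub>G\<^esub> u"

definition comm_degree :: "('a, 'b) monoid_scheme \<Rightarrow> 'a \<Rightarrow> nat" where
  "comm_degree G u = card {w. comm_adj G u w}"

definition comm_laplacian :: "('a, 'b) monoid_scheme \<Rightarrow> (nat \<Rightarrow> 'a) \<Rightarrow> real mat" where
  "comm_laplacian G e = mat (card (carrier G)) (card (carrier G))
     (\<lambda>(i, j). if i = j then real (comm_degree G (e i))
               else if comm_adj G (e i) (e j) then -1 else 0)"

definition induced_components :: "('a, 'b) monoid_scheme \<Rightarrow> 'a set \<Rightarrow> 'a set set" where
  "induced_components G S =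
     S // (({(u, v). u \<in> S \<and> v \<in> S \<and> comm_adj G u v})\<^sup>* \<inter> S \<times> S)"

end

theory Submission
  imports Defs
begin

interpretation cp: comm_ring_hom "\<lambda>a::real. [:a:]"
  by unfold_locales (auto simp: one_pCons)

lemma geo_alg:
  fixes A P :: "real mat"
  assumes A: "A \<in> carrier_mat n n" and P: "P \<in> carrier_mat n n" and dP: "det P \<noteq> 0"
  and U: "U \<subseteq> {0..<n}"
  and ev: "\<And>j i. j \<in> U \<Longrightarrow> i < n \<Longrightarrow> (A * P) $$ (i,j) = c * P $$ (i,j)"
  shows "card U \<le> order c (char_poly A)"
proof -
  define M where "M = char_poly_matrix A"
  define P' where "P' = map_mat (\<lambda>a. [:a:]) P"
  define D :: "real poly mat" where "D = mat n n (\<lambda>(i,j). if i = j then (if j \<in> U then [:-c,1:] else 1) else 0)"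
  define B where "B = mat n n (\<lambda>(i,j). if j \<in> U then [:P$$(i,j):] else (M*P')$$(i,j))"
  have M: "M \<in> carrier_mat n n" using A unfolding M_def by simp
  have P'c: "P' \<in> carrier_mat n n" using P unfolding P'_def by simp
  have Bc: "B \<in> carrier_mat n n" "D \<in> carrier_mat n n" unfolding B_def D_def by auto
  have Mij: "M $$ (i,k) = (if i = k then [:0,1:] else 0) + [:- (A $$ (i,k)):]" if "i < n" "k < n" for i k
    using that A unfolding M_def char_poly_matrix_def by auto
  have P'ij: "P' $$ (k,j) = [:P $$ (k,j):]" if "k < n" "j < n" for k j
    using P that unfolding P'_def by auto
  have MPU: "(M * P') $$ (i,j) = [:-c,1:] * [:P $$ (i,j):]" if "i < n" "j \<in> U" for i j
  proof -
    have j: "j < n" using that U by auto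
    have "(M * P') $$ (i,j) = (\<Sum>k\<in>{0..<n}. M $$ (i,k) * P' $$ (k,j))"
      using M P'c that j by (simp add: scalar_prod_def)
    also have "\<dots> = (\<Sum>k\<in>{0..<n}. (if i = k then [:0,1:] * [:P $$ (k,j):] else 0) + [:- (A $$ (i,k) * P $$ (k,j)):])"
      by (rule sum.cong, auto simp: Mij P'ij j that distrib_right)
    also have "\<dots> = [:0,1:] * [:P $$ (i,j):] + (\<Sum>k\<in>{0..<n}. [:- (A $$ (i,k) * P $$ (k,j)):])"
      using that by (simp add: sum.distrib)
    also have "(\<Sum>k\<in>{0..<n}. [:- (A $$ (i,k) * P $$ (k,j)):]) = [: - (\<Sum>k\<in>{0..<n}. A $$ (i,k) * P $$ (k,j)) :]"
      by (simp add: cp.hom_sum[symmetric] sum_negf)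
    also have "(\<Sum>k\<in>{0..<n}. A $$ (i,k) * P $$ (k,j)) = (A * P) $$ (i,j)"
      using A P that j by (simp add: scalar_prod_def)
    also have "\<dots> = c * P $$ (i,j)" using ev that by auto
    finally show ?thesis by (simp add: algebra_simps)
  qed
  have MP: "M * P' = B * D"
  proof (rule eq_matI)
    show "dim_row (M * P') = dim_row (B * D)" "dim_col (M * P') = dim_col (B * D)" using M P'c Bc by auto
    fix i j assume ij: "i < dim_row (B * D)" "j < dim_col (B * D)"
    hence i: "i < n" and j: "j < n" using Bc by auto
    have "(B * D) $$ (i,j) = (\<Sum>k\<in>{0..<n}. B $$ (i,k) * D $$ (k,j))"
      using Bc i j by (simp add: scalar_prod_def)
    also have "\<dots> = (\<Sum>k\<in>{j}. B $$ (i,k) * D $$ (k,j))"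
      by (rule sum.mono_neutral_right, use j in \<open>auto simp: D_def\<close>)
    also have "\<dots> = (M * P') $$ (i,j)"
      using i j by (auto simp: B_def D_def MPU)
    finally show "(M * P') $$ (i, j) = (B * D) $$ (i, j)" by simp
  qed
  have "det D = (\<Prod>j\<in>{0..<n}. D $$ (j,j))"
    by (subst det_upper_triangular[OF _ Bc(2)], auto simp: D_def upper_triangular_def prod_list_diag_prod)
  also have "\<dots> = (\<Prod>j\<in>{0..<n}. if j \<in> U then [:-c,1:] else 1)"
    by (rule prod.cong, auto simp: D_def)
  also have "\<dots> = [:-c,1:] ^ card U"
    using U by (simp add: prod.If_cases Int_absorb1)
  finally have dD: "det D = [:-c,1:] ^ card U" .
  have "det M * [:det P:] = det B * [:-c,1:] ^ card U"
    using det_mult[OF M P'c] det_mult[OF Bc] MP dD by (simp add: P'_def)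
  hence "[:-c,1:] ^ card U dvd char_poly A * [:det P:]"
    unfolding M_def char_poly_def by (metis dvd_triv_right)
  hence dv: "[:-c,1:] ^ card U dvd char_poly A"
    using dP by (subst (asm) dvd_mult_unit_iff) (auto simp: is_unit_const_poly_iff)
  have "char_poly A \<noteq> 0" using degree_monic_char_poly[OF A] by auto
  from order_max[OF dv this] show ?thesis .
qed
definition Kc :: "('a, 'b) monoid_scheme \<Rightarrow> 'a \<Rightarrow> 'a set" where
  "Kc G u = {w \<in> carrier G - center G. w \<otimes>\<^bsub>G\<^esub> u = u \<otimes>\<^bsub>G\<^esub> w}"

lemma cent_eq:
  assumes "con_condition G" "u \<in> carrier G - center G" "v \<in> carrier G - center G"
    "u \<otimes>\<^bsub>G\<^esub> v = v \<otimes>\<^bsub>G\<^esub> u"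
  shows "centralizer G u = centralizer G v"
proof -
  have "u \<in> centralizer G u \<inter> centralizer G v" using assms by (auto simp: centralizer_def)
  hence "centralizer G u \<inter> centralizer G v \<noteq> center G" using assms by auto
  thus ?thesis using assms unfolding con_condition_def by blast
qed

lemma comm_trans:
  assumes "con_condition G" "u \<in> carrier G - center G" "v \<in> carrier G - center G"
    "w \<in> carrier G - center G"
    "u \<otimes>\<^bsub>G\<^esub> v = v \<otimes>\<^bsub>G\<^esub> u" "v \<otimes>\<^bsub>G\<^esub> w = w \<otimes>\<^bsub>G\<^esub> v"
  shows "u \<otimes>\<^bsub>G\<^esub> w = w \<otimes>\<^bsub>G\<^esub> u"
proof -
  have "centralizer G u = centralizer G v" by (rule cent_eq, use assms in auto)
  also have "\<dots> = centralizer G w" by (rule cent_eq, use assms in auto)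
  finally have "w \<in> centralizer G u" using assms by (auto simp: centralizer_def)
  thus ?thesis by (auto simp: centralizer_def)
qed

lemma Kc_sub: "Kc G u \<subseteq> carrier G - center G" unfolding Kc_def by auto

lemma Kc_self: "u \<in> carrier G - center G \<Longrightarrow> u \<in> Kc G u" unfolding Kc_def by auto

lemma Kc_mem_iff:
  assumes "con_condition G" "x \<in> carrier G - center G" "y \<in> Kc G x"
  shows "z \<in> Kc G y \<longleftrightarrow> z \<in> Kc G x"
proof -
  have x: "x \<in> carrier G" "x \<notin> center G" and y: "y \<in> carrier G" "y \<notin> center G"
    and xy: "y \<otimes>\<^bsub>G\<^esub> x = x \<otimes>\<^bsub>G\<^esub> y"
    using assms unfolding Kc_def by auto
  show ?thesis
  proof
    assume "z \<in> Kc G y"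
    hence z: "z \<in> carrier G - center G" "z \<otimes>\<^bsub>G\<^esub> y = y \<otimes>\<^bsub>G\<^esub> z" unfolding Kc_def by auto
    have "z \<otimes>\<^bsub>G\<^esub> x = x \<otimes>\<^bsub>G\<^esub> z"
      by (rule comm_trans[OF assms(1), of z y x], use x y z xy in auto)
    thus "z \<in> Kc G x" using z unfolding Kc_def by auto
  next
    assume "z \<in> Kc G x"
    hence z: "z \<in> carrier G - center G" "z \<otimes>\<^bsub>G\<^esub> x = x \<otimes>\<^bsub>G\<^esub> z" unfolding Kc_def by auto
    have "z \<otimes>\<^bsub>G\<^esub> y = y \<otimes>\<^bsub>G\<^esub> z"
      by (rule comm_trans[OF assms(1), of z x y], use x y z xy in auto)
    thus "z \<in> Kc G y" using z unfolding Kc_def by auto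
  qed
qed

lemma Kc_eq:
  assumes "con_condition G" "x \<in> carrier G - center G" "y \<in> Kc G x"
  shows "Kc G y = Kc G x"
  using Kc_mem_iff[OF assms] by auto

lemma comps_eq:
  assumes "con_condition G"
  shows "induced_components G (carrier G - center G) = Kc G ` (carrier G - center G)"
proof -
  define NC where "NC = carrier G - center G"
  define R where "R = {(u, v). u \<in> NC \<and> v \<in> NC \<and> comm_adj G u v}"
  have 1: "x = y \<or> (x \<in> NC \<and> y \<in> NC \<and> x \<otimes>\<^bsub>G\<^esub> y = y \<otimes>\<^bsub>G\<^esub> x)" if "(x,y) \<in> R\<^sup>*" for x y
    using that
  proof (induction rule: rtrancl_induct)
    case base then show ?case by simp
  next
    case (step y z)
    then show ?case using comm_trans[OF assms, of x y z] unfolding R_def comm_adj_def NC_def by auto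
  qed
  have rel: "R\<^sup>* \<inter> NC \<times> NC = {(u,v). u \<in> NC \<and> v \<in> NC \<and> u \<otimes>\<^bsub>G\<^esub> v = v \<otimes>\<^bsub>G\<^esub> u}"
  proof
    show "R\<^sup>* \<inter> NC \<times> NC \<subseteq> {(u,v). u \<in> NC \<and> v \<in> NC \<and> u \<otimes>\<^bsub>G\<^esub> v = v \<otimes>\<^bsub>G\<^esub> u}"
      using 1 by auto
    show "{(u,v). u \<in> NC \<and> v \<in> NC \<and> u \<otimes>\<^bsub>G\<^esub> v = v \<otimes>\<^bsub>G\<^esub> u} \<subseteq> R\<^sup>* \<inter> NC \<times> NC"
    proof -
      have "(u,v) \<in> R\<^sup>*" if "u \<in> NC" "v \<in> NC" "u \<otimes>\<^bsub>G\<^esub> v = v \<otimes>\<^bsub>G\<^esub> u" for u v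
        using that by (cases "u = v") (auto simp: R_def comm_adj_def NC_def intro: r_into_rtrancl)
      thus ?thesis by auto
    qed
  qed
  have "induced_components G NC = NC // (R\<^sup>* \<inter> NC \<times> NC)"
    unfolding induced_components_def R_def by simp
  also have "\<dots> = (\<lambda>u. (R\<^sup>* \<inter> NC \<times> NC) `` {u}) ` NC"
    unfolding quotient_def by auto
  also have "\<dots> = Kc G ` NC"
  proof (rule image_cong[OF refl])
    fix u assume "u \<in> NC"
    thus "(R\<^sup>* \<inter> NC \<times> NC) `` {u} = Kc G u"
    proof -
      have "(R\<^sup>* \<inter> NC \<times> NC) `` {u} = {v. (u,v) \<in> R\<^sup>* \<inter> NC \<times> NC}" by auto
      also have "\<dots> = {v. (u,v) \<in> {(u,v). u \<in> NC \<and> v \<in> NC \<and> u \<otimes>\<^bsub>G\<^esub> v = v \<otimes>\<^bsub>G\<^esub> u}}"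
        by (simp only: rel)
      also have "\<dots> = Kc G u" using \<open>u \<in> NC\<close> by (auto simp: Kc_def NC_def)
      finally show ?thesis .
    qed
  qed
  finally show ?thesis unfolding NC_def .
qed

lemma adj_set:
  assumes "x \<in> carrier G"
  shows "{w. comm_adj G x w} = centralizer G x - {x}"
  using assms unfolding comm_adj_def centralizer_def by auto

lemma cent_NC:
  assumes "group G" "x \<in> carrier G - center G"
  shows "centralizer G x = center G \<union> Kc G x"
  using assms unfolding centralizer_def center_def Kc_def by auto

lemma cent_Z:
  assumes "x \<in> center G"
  shows "centralizer G x = carrier G"
  using assms unfolding centralizer_def center_def by auto
lemma lap_mult:
  assumes grp: "group G" and fin: "finite (carrier G)" and con: "con_condition G"
  and bij: "bij_betw e {0..<card (carrier G)} (carrier G)"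
  and supp: "\<And>y. y \<notin> carrier G - center G \<Longrightarrow> f y = 0"
  and const: "\<And>x y. x \<in> carrier G - center G \<Longrightarrow> y \<in> Kc G x \<Longrightarrow> f y = f x"
  and s0: "(\<Sum>y\<in>carrier G. f y) = 0"
  and i: "i < card (carrier G)"
  shows "(\<Sum>k\<in>{0..<card (carrier G)}. comm_laplacian G e $$ (i,k) * f (e k)) = real (card (center G)) * f (e i)"
proof -
  define n where "n = card (carrier G)"
  define x where "x = e i"
  have x: "x \<in> carrier G" using bij i unfolding x_def bij_betw_def by auto
  have adjx: "\<not> comm_adj G x x" unfolding comm_adj_def by auto
  have Lik: "comm_laplacian G e $$ (i,k) * f (e k) =
     (if k = i then real (comm_degree G x) * f x else 0) + (if comm_adj G x (e k) then - f (e k) else 0)"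
    if "k \<in> {0..<n}" for k
    using that i adjx unfolding comm_laplacian_def n_def x_def by auto
  have "(\<Sum>k\<in>{0..<n}. comm_laplacian G e $$ (i,k) * f (e k)) =
     (\<Sum>k\<in>{0..<n}. (if k = i then real (comm_degree G x) * f x else 0)) +
     (\<Sum>k\<in>{0..<n}. (if comm_adj G x (e k) then - f (e k) else 0))"
    by (simp add: Lik sum.distrib)
  also have "(\<Sum>k\<in>{0..<n}. (if k = i then real (comm_degree G x) * f x else 0)) = real (comm_degree G x) * f x"
    using i unfolding n_def by simp
  also have "(\<Sum>k\<in>{0..<n}. (if comm_adj G x (e k) then - f (e k) else 0)) =
      (\<Sum>y\<in>carrier G. (if comm_adj G x y then - f y else 0))"
    using sum.reindex_bij_betw[OF bij, of "\<lambda>y. if comm_adj G x y then - f y else 0"] unfolding n_def by simp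
  also have "\<dots> = - (\<Sum>y\<in>{y \<in> carrier G. comm_adj G x y}. f y)"
    using fin by (simp add: sum.inter_filter sum_negf[symmetric] if_distrib cong: if_cong)
  also have "{y \<in> carrier G. comm_adj G x y} = centralizer G x - {x}"
    using adj_set[OF x] unfolding comm_adj_def by auto
  also have "comm_degree G x = card (centralizer G x - {x})"
    unfolding comm_degree_def adj_set[OF x] ..
  finally have eq: "(\<Sum>k\<in>{0..<n}. comm_laplacian G e $$ (i,k) * f (e k)) =
     real (card (centralizer G x - {x})) * f x - (\<Sum>y\<in>centralizer G x - {x}. f y)" by simp
  have cfin: "finite (centralizer G x)" using fin unfolding centralizer_def by auto
  show ?thesis
  proof (cases "x \<in> center G")
    case True
    have fx: "f x = 0" using supp True by auto
    have "(\<Sum>y\<in>centralizer G x - {x}. f y) = (\<Sum>y\<in>carrier G. f y) - f x"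
      unfolding cent_Z[OF True] using fin x by (simp add: sum_diff1)
    thus ?thesis using eq fx s0 unfolding n_def x_def by simp
  next
    case False
    hence xNC: "x \<in> carrier G - center G" using x by auto
    have dec: "centralizer G x - {x} = center G \<union> (Kc G x - {x})"
      using cent_NC[OF grp xNC] False by auto
    have disj: "center G \<inter> (Kc G x - {x}) = {}" using Kc_sub[of G x] by auto
    have fZ: "finite (center G)" "finite (Kc G x - {x})"
      using fin Kc_sub[of G x] unfolding center_def by (auto intro: finite_subset)
    have "(\<Sum>y\<in>centralizer G x - {x}. f y) = (\<Sum>y\<in>center G. f y) + (\<Sum>y\<in>Kc G x - {x}. f y)"
      unfolding dec by (rule sum.union_disjoint[OF fZ disj])
    also have "(\<Sum>y\<in>center G. f y) = 0" using supp by simp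
    also have "(\<Sum>y\<in>Kc G x - {x}. f y) = (\<Sum>y\<in>Kc G x - {x}. f x)"
      by (rule sum.cong, use const[OF xNC] in auto)
    finally have s: "(\<Sum>y\<in>centralizer G x - {x}. f y) = real (card (Kc G x - {x})) * f x" by simp
    have c: "card (centralizer G x - {x}) = card (center G) + card (Kc G x - {x})"
      unfolding dec by (rule card_Un_disjoint[OF fZ disj])
    show ?thesis using eq s c unfolding n_def x_def by (simp add: algebra_simps)
  qed
qed
lemma Kc_class:
  assumes con: "con_condition G" and x: "x \<in> carrier G - center G" and y: "y \<in> Kc G x"
    and w: "w \<in> carrier G - center G"
  shows "y \<in> Kc G w \<longleftrightarrow> x \<in> Kc G w"
proof
  assume "y \<in> Kc G w"
  hence "Kc G y = Kc G w" by (rule Kc_eq[OF con w])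
  moreover have "Kc G y = Kc G x" by (rule Kc_eq[OF con x y])
  ultimately show "x \<in> Kc G w" using Kc_self[OF x] by simp
next
  assume "x \<in> Kc G w"
  hence "Kc G x = Kc G w" by (rule Kc_eq[OF con w])
  thus "y \<in> Kc G w" using y by simp
qed

theorem proposition2p8:
  fixes G :: "('a, 'b) monoid_scheme" and e :: "nat \<Rightarrow> 'a" and r :: nat
  assumes "group G"
    and "finite (carrier G)"
    and "\<not> comm_group G"
    and "con_condition G"
    and "bij_betw e {0..<card (carrier G)} (carrier G)"
    and "r = card (induced_components G (carrier G - center G))"
  shows "eigenvalue (comm_laplacian G e) (real (card (center G)))
       \<and> Polynomial.order (real (card (center G))) (char_poly (comm_laplacian G e)) \<ge> r - 1"
proof -
  note grp = assms(1) and fin = assms(2) and con = assms(4) and bij = assms(5)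
  define NC where "NC = carrier G - center G"
  define n where "n = card (carrier G)"
  define L where "L = comm_laplacian G e"
  define lam where "lam = real (card (center G))"
  have Lc: "L \<in> carrier_mat n n" unfolding L_def comm_laplacian_def n_def by simp
  define Comps where "Comps = Kc G ` NC"
  have rC: "r = card Comps" using assms(6) comps_eq[OF con] unfolding NC_def Comps_def by simp
  have bij': "bij_betw e {0..<n} (carrier G)" using bij unfolding n_def .
  define ie where "ie = the_inv_into {0..<n} e"
  have e_ie: "e (ie y) = y" if "y \<in> carrier G" for y
    unfolding ie_def by (rule f_the_inv_into_f_bij_betw[OF bij'], use that in auto)
  have ie_rng: "ie y < n" if "y \<in> carrier G" for y
    using bij_betwE[OF bij_betw_the_inv_into[OF bij']] that unfolding ie_def by auto
  have ie_e: "ie (e j) = j" if "j < n" for j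
    unfolding ie_def by (rule the_inv_into_f_f, use bij' that in \<open>auto simp: bij_betw_def\<close>)
  have e_car: "e j \<in> carrier G" if "j < n" for j using bij_betwE[OF bij'] that by auto
  define mx where "mx X = Max (ie ` X)" for X
  have Kfin: "finite (Kc G u)" for u by (rule finite_subset[OF _ fin], use Kc_sub[of G u] in auto)
  have mx_mem: "mx (Kc G u) \<in> ie ` Kc G u" if "u \<in> NC" for u
    unfolding mx_def using Kfin[of u] Kc_self[of u G] that NC_def by (intro Max_in) auto
  have mx_ge: "ie y \<le> mx (Kc G u)" if "y \<in> Kc G u" for u y
    unfolding mx_def using Kfin[of u] that by (intro Max_ge) auto
  have finC: "finite Comps" unfolding Comps_def NC_def using fin by auto
  have "\<exists>a\<in>carrier G. \<exists>b\<in>carrier G. a \<otimes>\<^bsub>G\<^esub> b \<noteq> b \<otimes>\<^bsub>G\<^esub> a"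
  proof (rule ccontr)
    assume "\<not> ?thesis"
    hence "comm_group G" by (intro group.group_comm_groupI[OF grp]) auto
    thus False using assms(3) by simp
  qed
  then obtain a b where ab: "a \<in> carrier G" "b \<in> carrier G" "a \<otimes>\<^bsub>G\<^esub> b \<noteq> b \<otimes>\<^bsub>G\<^esub> a"
    by blast
  have "a \<notin> center G" using ab unfolding center_def by auto
  moreover have "b \<notin> center G"
  proof
    assume "b \<in> center G"
    hence "\<forall>g\<in>carrier G. b \<otimes>\<^bsub>G\<^esub> g = g \<otimes>\<^bsub>G\<^esub> b" unfolding center_def by simp
    hence "b \<otimes>\<^bsub>G\<^esub> a = a \<otimes>\<^bsub>G\<^esub> b" using ab(1) by (rule bspec)
    thus False using ab(3) by simp
  qed
  ultimately have aNC: "a \<in> NC" "b \<in> NC" using ab unfolding NC_def by auto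
  have "Kc G a \<noteq> Kc G b"
  proof
    assume "Kc G a = Kc G b"
    hence "a \<in> Kc G b" using Kc_self[of a G] aNC NC_def by auto
    thus False using ab unfolding Kc_def by auto
  qed
  hence c2: "card {Kc G a, Kc G b} = 2" by simp
  have sub2: "{Kc G a, Kc G b} \<subseteq> Comps" using aNC unfolding Comps_def by blast
  have r2: "r \<ge> 2" using card_mono[OF finC sub2] c2 rC by linarith
  have Cne: "Comps \<noteq> {}" using aNC unfolding Comps_def by auto
  define m where "m = Min (mx ` Comps)"
  have "m \<in> mx ` Comps" unfolding m_def using finC Cne by (intro Min_in) auto
  then obtain u0 where u0: "u0 \<in> NC" "mx (Kc G u0) = m" unfolding Comps_def by auto
  define X0 where "X0 = Kc G u0"
  have X0min: "mx X0 \<le> mx (Kc G u)" if "u \<in> NC" for u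
    unfolding X0_def u0 m_def using finC that unfolding Comps_def by (intro Min_le) auto
  define m0 where "m0 = card X0"
  have m0pos: "m0 \<ge> 1" unfolding m0_def X0_def using Kfin[of u0] Kc_self[of u0 G] u0 NC_def
    by (metis Suc_leI card_gt_0_iff empty_iff One_nat_def)
  define U where "U = {j \<in> {0..<n}. e j \<in> NC \<and> Kc G (e j) \<noteq> X0 \<and> mx (Kc G (e j)) = j}"
  have cardU: "card U = r - 1"
  proof -
    have inj: "inj_on (\<lambda>j. Kc G (e j)) U"
      by (rule inj_onI) (metis (mono_tags, lifting) U_def mem_Collect_eq)
    have img: "(\<lambda>j. Kc G (e j)) ` U = Comps - {X0}"
    proof
      show "(\<lambda>j. Kc G (e j)) ` U \<subseteq> Comps - {X0}" unfolding U_def Comps_def by auto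
      show "Comps - {X0} \<subseteq> (\<lambda>j. Kc G (e j)) ` U"
      proof
        fix X assume X: "X \<in> Comps - {X0}"
        then obtain u where u: "u \<in> NC" "X = Kc G u" unfolding Comps_def by auto
        obtain y where y: "y \<in> Kc G u" "mx (Kc G u) = ie y" using mx_mem[OF u(1)] by auto
        have yc: "y \<in> carrier G" using y Kc_sub[of G u] by auto
        have ej: "e (ie y) = y" by (rule e_ie[OF yc])
        have KK: "Kc G y = Kc G u" by (rule Kc_eq[OF con _ y(1)], use u NC_def in auto)
        have "ie y \<in> U" unfolding U_def using ej KK y u X ie_rng[OF yc] Kc_sub[of G u] NC_def by auto
        thus "X \<in> (\<lambda>j. Kc G (e j)) ` U" using ej KK u by force
      qed
    qed
    have "card U = card (Comps - {X0})" using card_image[OF inj] img by simp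
    also have "\<dots> = card Comps - 1" using u0 unfolding X0_def Comps_def by (simp add: card_Diff_singleton)
    finally show ?thesis using rC by simp
  qed
  have U_props: "j < n" "e j \<in> NC" "Kc G (e j) \<noteq> X0" "mx (Kc G (e j)) = j" if "j \<in> U" for j
    using that unfolding U_def by auto
  have notX0: "e j \<notin> X0" if "j \<in> U" for j
  proof
    assume "e j \<in> X0"
    hence "Kc G (e j) = X0" unfolding X0_def by (rule Kc_eq[OF con u0(1)[unfolded NC_def]])
    thus False using U_props(3)[OF that] by simp
  qed
  define F where "F j y = (if y \<in> X0 then real (card (Kc G (e j))) else if y \<in> Kc G (e j) then - real m0 else 0)" for j y
  define P where "P = mat n n (\<lambda>(i,j). if j \<in> U then F j (e i) else if i = j then 1 else (0::real))"
  have Pc: "P \<in> carrier_mat n n" unfolding P_def by simp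
  have detP: "det P \<noteq> 0"
  proof -
    have ut: "upper_triangular P"
      unfolding upper_triangular_def
    proof (intro allI impI)
      fix i j assume i: "i < dim_row P" and ji: "j < i"
      hence i': "i < n" and j': "j < n" using Pc by auto
      show "P $$ (i,j) = 0"
      proof (cases "j \<in> U")
        case True
        have "e i \<notin> X0"
        proof
          assume "e i \<in> X0"
          hence "i \<le> mx X0" using mx_ge[of "e i" u0] ie_e[OF i'] unfolding X0_def by simp
          also have "\<dots> \<le> j" using X0min[OF U_props(2)[OF True]] U_props(4)[OF True] by simp
          finally show False using ji by simp
        qed
        moreover have "e i \<notin> Kc G (e j)"
        proof
          assume "e i \<in> Kc G (e j)"
          hence "i \<le> j" using mx_ge[of "e i" "e j"] ie_e[OF i'] U_props(4)[OF True] by simp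
          thus False using ji by simp
        qed
        ultimately show ?thesis using True i' j' unfolding P_def F_def by simp
      next
        case False thus ?thesis using i' j' ji unfolding P_def by simp
      qed
    qed
    have "det P = (\<Prod>j = 0..<n. P $$ (j,j))"
      using det_upper_triangular[OF ut Pc] Pc by (simp add: prod_list_diag_prod)
    also have "\<dots> \<noteq> 0"
    proof -
      have "P $$ (j,j) \<noteq> 0" if j: "j \<in> {0..<n}" for j
      proof (cases "j \<in> U")
        case True
        have "e j \<in> Kc G (e j)" using Kc_self[of "e j" G] U_props(2)[OF True] NC_def by auto
        thus ?thesis using True j notX0[OF True] m0pos unfolding P_def F_def by simp
      next
        case False thus ?thesis using j unfolding P_def by simp
      qed
      thus ?thesis by (subst prod_zero_iff) auto
    qed
    finally show ?thesis .
  qed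
  have ev: "(L * P) $$ (i,j) = lam * P $$ (i,j)" if j: "j \<in> U" and i: "i < n" for i j
  proof -
    have jn: "j < n" using U_props(1)[OF j] .
    have ejNC: "e j \<in> carrier G - center G" using U_props(2)[OF j] NC_def by simp
    have u0NC: "u0 \<in> carrier G - center G" using u0 NC_def by simp
    have disj: "X0 \<inter> Kc G (e j) = {}"
    proof (rule ccontr)
      assume "X0 \<inter> Kc G (e j) \<noteq> {}"
      then obtain y where y: "y \<in> X0" "y \<in> Kc G (e j)" by auto
      have "Kc G y = X0" unfolding X0_def by (rule Kc_eq[OF con u0NC], use y X0_def in simp)
      moreover have "Kc G y = Kc G (e j)" by (rule Kc_eq[OF con ejNC y(2)])
      ultimately show False using U_props(3)[OF j] by simp
    qed
    have supp: "F j y = 0" if "y \<notin> carrier G - center G" for y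
      using that Kc_sub[of G u0] Kc_sub[of G "e j"] unfolding F_def X0_def by auto
    have const: "F j y = F j x" if "x \<in> carrier G - center G" "y \<in> Kc G x" for x y
      using Kc_class[OF con that u0NC] Kc_class[OF con that ejNC] unfolding F_def X0_def by simp
    have X0c: "X0 \<subseteq> carrier G" "Kc G (e j) \<subseteq> carrier G" using Kc_sub[of G u0] Kc_sub[of G "e j"] X0_def by auto
    have Fsplit: "F j y = (if y \<in> X0 then real (card (Kc G (e j))) else 0) + (if y \<in> Kc G (e j) then - real m0 else 0)" for y
      using disj unfolding F_def by auto
    have s1: "(\<Sum>y\<in>carrier G. if y \<in> X0 then real (card (Kc G (e j))) else 0) = real m0 * real (card (Kc G (e j)))"
      using fin X0c unfolding m0_def by (simp add: sum.If_cases Int_absorb1)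
    have s2: "(\<Sum>y\<in>carrier G. if y \<in> Kc G (e j) then - real m0 else 0) = - real m0 * real (card (Kc G (e j)))"
      using fin X0c by (simp add: sum.If_cases Int_absorb1)
    have s0: "(\<Sum>y\<in>carrier G. F j y) = 0"
      by (simp only: Fsplit sum.distrib s1 s2)
    have "(L * P) $$ (i,j) = (\<Sum>k\<in>{0..<n}. L $$ (i,k) * P $$ (k,j))"
      using Lc Pc i jn by (simp add: scalar_prod_def)
    also have "\<dots> = (\<Sum>k\<in>{0..<n}. L $$ (i,k) * F j (e k))"
      by (rule sum.cong, use jn j in \<open>auto simp: P_def\<close>)
    also have "\<dots> = lam * F j (e i)"
      using lap_mult[OF grp fin con bij supp const s0, of i] i unfolding L_def lam_def n_def by simp
    also have "\<dots> = lam * P $$ (i,j)" using i jn j by (simp add: P_def)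
    finally show ?thesis .
  qed
  have U_sub: "U \<subseteq> {0..<n}" unfolding U_def by auto
  have ord: "card U \<le> order lam (char_poly L)"
    by (rule geo_alg[OF Lc Pc detP U_sub ev])
  hence ord': "order lam (char_poly L) \<ge> r - 1" using cardU by simp
  have "char_poly L \<noteq> 0" using degree_monic_char_poly[OF Lc] by auto
  hence "poly (char_poly L) lam = 0" using ord' r2 order_root by fastforce
  hence "eigenvalue L lam" using eigenvalue_root_char_poly[OF Lc] by simp
  thus ?thesis using ord' unfolding L_def lam_def by simp
qed

end
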